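(* With probability one, $L_\alpha=\mathbb{T}$ for every real $\alpha\in(\widetilde h,\infty)$.
   Context: Let $\mathbb{T}=\mathbb{R}/\mathbb{Z}$ with canonical surjection $\phi:\mathbb{R}\to\mathbb{T}$ and quotient distance $d$. Let $\mathcal{U}=\{\varnothing\}\cup\bigcup_{j\ge1}\{0,1\}^j$ be the set of finite words over $\{0,1\}$; for $u=u_1\dots u_j$ write $|u|=j$ ($|\varnothing|=0$), and let $u\mathcal{U}^*$ denote the words $uw$ with $w$ nonempty. Put $x_u=\phi(\sum_{j=1}^{|u|}u_j2^{-j})$. For each $j\ge0$, $\nu_{0,j},\nu_{1,j}$ are probability measures on $\{0,1\}^2$, and $X=(X_u)_{u\in\mathcal{U}}$ is a $\{0,1\}$-valued process with: for all $u\in\mathcal{U}$, $A\subseteq\{0,1\}^2$, $\mathbb{P}((X_{u0},X_{u1})\in A\mid\mathcal{G}_u)=\nu_{X_u,|u|}(A)$, $\mathcal{G}_u=\sigma(X_v:v\in\mathcal{U}\setminus u\mathcal{U}^* )$. Fix $\underline{h}>0$. Let $\eta_j=1-\nu_{0,j}(\{(0,0)\})$ and $\widetilde h=\inf\{h>0:\sum_j2^{(1-\underline{h}/h)j}\eta_j=\infty\}$ ($\inf\emptyset=\infty$). Let $S=\{u\in\mathcal{U}:X_u=1\}$ and, for $\alpha>\underline{h}$, $L_\alpha=\{x\in\mathbb{T}:d(x,x_u)<2^{-\underline{h}|u|/\alpha}\text{ for infinitely many }u\in S\}$. *)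

theory Defs
  imports "HOL-Probability.Probability"
begin

text \<open>Finite binary words are represented as bool lists u = [u_1,...,u_j]
  (True = 1, False = 0); u0 is u @ [False], u1 is u @ [True].\<close>

text \<open>The dyadic point x_u, as a real representative in [0,1) of a point of T = R/Z.\<close>
definition xpt :: "bool list \<Rightarrow> real" where
  "xpt u = (\<Sum>i<length u. (if u ! i then 1 else 0) / 2 ^ (i + 1))"

definition tdist :: "real \<Rightarrow> real \<Rightarrow> real" where
  "tdist x y = (INF k::int. \<bar>x - y - of_int k\<bar>)"

definition descendants :: "bool list \<Rightarrow> bool list set" where
  "descendants u = {u @ w | w. w \<noteq> []}"

definition Gsig :: "'a measure \<Rightarrow> (bool list \<Rightarrow> 'a \<Rightarrow> bool) \<Rightarrow> bool list \<Rightarrow> 'a measure" where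
  "Gsig M X u = sigma (space M)
     (\<Union>v \<in> - descendants u. {X v -` A \<inter> space M | A. A \<subseteq> (UNIV :: bool set)})"

definition eta :: "(bool \<Rightarrow> nat \<Rightarrow> (bool \<times> bool) pmf) \<Rightarrow> nat \<Rightarrow> real" where
  "eta \<nu> j = 1 - pmf (\<nu> False j) (False, False)"

text \<open>htilde = inf {h > 0 : sum_j 2^((1 - hl/h) j) eta_j = infinity}, inf of the empty set = infinity.
  The series has nonnegative terms, so divergence to infinity means non-summability.\<close>
definition htilde :: "real \<Rightarrow> (bool \<Rightarrow> nat \<Rightarrow> (bool \<times> bool) pmf) \<Rightarrow> ereal" where
  "htilde hl \<nu> = Inf {ereal h | h. h > 0 \<and>
      \<not> summable (\<lambda>j. 2 powr ((1 - hl / h) * real j) * eta \<nu> j)}"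

text \<open>L_alpha (for a fixed outcome omega), as a set of real representatives of points of T.\<close>
definition Lset :: "real \<Rightarrow> (bool list \<Rightarrow> 'a \<Rightarrow> bool) \<Rightarrow> real \<Rightarrow> 'a \<Rightarrow> real set" where
  "Lset hl X \<alpha> \<omega> = {x. infinite {u. X u \<omega> \<and>
      tdist x (xpt u) < 2 powr (- (hl * real (length u) / \<alpha>))}}"

end

theory Submission
  imports Defs "HOL-Real_Asymp.Real_Asymp"
begin


fun wrd :: "nat \<Rightarrow> nat \<Rightarrow> bool list" where
  "wrd 0 m = []"
| "wrd (Suc n) m = wrd n (m div 2) @ [odd m]"

lemma length_wrd[simp]: "length (wrd n m) = n"
  by (induction n arbitrary: m) auto

lemma xpt_append: "xpt (u @ [b]) = xpt u + (if b then 1 else 0) / 2 ^ (length u + 1)"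
  unfolding xpt_def by (simp add: nth_append)

lemma xpt_wrd: "xpt (wrd n m) = real (m mod 2^n) / 2^n"
proof (induction n arbitrary: m)
  case 0
  then show ?case by (simp add: xpt_def)
next
  case (Suc n)
  have e: "m mod 2^(Suc n) = 2 * ((m div 2) mod 2^n) + m mod 2"
    by (simp add: mod_mult2_eq mult.commute)
  have IH: "xpt (wrd n (m div 2)) = real ((m div 2) mod 2^n) / 2^n" using Suc by simp
  have "real (m mod 2^(Suc n)) = 2 * real ((m div 2) mod 2^n) + real (m mod 2)"
    using e by simp
  then show ?case
    by (cases "odd m") (auto simp add: xpt_append IH field_simps odd_iff_mod_2_eq_one even_iff_mod_2_eq_zero)
qed

lemma tdist_le: "tdist x z \<le> \<bar>x - z - of_int k\<bar>"
  unfolding tdist_def by (rule cINF_lower) (auto intro: bdd_belowI[where m=0])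

lemma mod_add_inj_aux: "(m + i) mod N = (m + j) mod N \<Longrightarrow> j < (N::nat) \<Longrightarrow> i < j \<Longrightarrow> False"
proof -
  assume a: "(m + i) mod N = (m + j) mod N" "j < N" "i < j"
  then have "N dvd (m + j) - (m + i)" using mod_eq_dvd_iff_nat[of "m+i" "m+j" N] by simp
  then have "N dvd j - i" by simp
  moreover have "0 < j - i" "j - i < N" using a by auto
  ultimately show False using nat_dvd_not_less by blast
qed

lemma mod_add_inj: "(m + i) mod N = (m + j) mod N \<Longrightarrow> i < (N::nat) \<Longrightarrow> j < N \<Longrightarrow> i = j"
  by (metis linorder_neqE_nat mod_add_inj_aux)

lemma wrd_eq: "wrd n a = wrd n b \<Longrightarrow> a mod 2^n = b mod 2^n"
proof -
  assume "wrd n a = wrd n b"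
  then have "real (a mod 2^n) / 2^n = real (b mod 2^n) / 2^n" by (metis xpt_wrd)
  then have "real (a mod 2^n) = real (b mod 2^n)"
    by (metis divide_cancel_right power_not_zero zero_neq_numeral)
  then show ?thesis using of_nat_eq_iff by blast
qed

definition blk :: "nat \<Rightarrow> nat \<Rightarrow> nat \<Rightarrow> bool list list" where
  "blk n m K = map (\<lambda>i. wrd n (m+i)) [0..<K]"

lemma distinct_blk: "K \<le> 2^n \<Longrightarrow> distinct (blk n m K)"
  unfolding blk_def distinct_map
  by (auto simp: inj_on_def dest!: wrd_eq intro: mod_add_inj)

lemma set_blk_length: "v \<in> set (blk n m K) \<Longrightarrow> length v = n"
  unfolding blk_def by auto

lemma cover_geom:
  fixes x :: real
  assumes "i < K" "m = nat \<lfloor>(x - \<lfloor>x\<rfloor>) * 2^n\<rfloor>" "e = 0 \<or> e = 1 / 2^(n+1)"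
  shows "tdist x (xpt (wrd n (m+i)) + e) \<le> real (K+1) / 2^n"
proof -
  define y where "y = x - \<lfloor>x\<rfloor>"
  define j where "j = m + i"
  define q where "q = j div 2^n"
  have y0: "0 \<le> y" "y < 1" unfolding y_def by linarith+
  have p: "(0::real) < 2^n" by simp
  have my: "real m \<le> y * 2^n" "y * 2^n < real m + 1"
  proof -
    have "y * 2^n \<ge> 0" using y0 p by simp
    then have "real_of_int \<lfloor>y * 2^n\<rfloor> = real m" using assms(2) unfolding y_def[symmetric] by simp
    then show "real m \<le> y * 2^n" "y * 2^n < real m + 1" by linarith+
  qed
  have jq: "real (j mod 2^n) = real j - 2^n * real q"
    unfolding q_def by (metis (no_types, lifting) add_diff_cancel_left' div_mult_mod_eq mult.commute of_nat_add of_nat_mult of_nat_numeral of_nat_power)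
  have xw: "xpt (wrd n j) = real j / 2^n - real q"
    using jq p by (simp add: xpt_wrd field_simps)
  have "tdist x (xpt (wrd n j) + e) \<le> \<bar>x - (xpt (wrd n j) + e) - of_int (\<lfloor>x\<rfloor> + int q)\<bar>"
    by (rule tdist_le)
  also have "\<dots> = \<bar>y - real j / 2^n - e\<bar>" unfolding xw y_def by simp
  also have "\<dots> = \<bar>y * 2^n - real j - e * 2^n\<bar> / 2^n"
  proof -
    have "y - real j / 2^n - e = (y * 2^n - real j - e * 2^n) / 2^n" using p by (simp add: diff_divide_distrib)
    then show ?thesis using p by simp
  qed
  also have "\<dots> \<le> real (K+1) / 2^n"
  proof (rule divide_right_mono)
    have e2: "e * 2^n = 0 \<or> e * 2^n = 1/2" using assms(3) by auto
    have "real j = real m + real i" unfolding j_def by simp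
    then show "\<bar>y * 2^n - real j - e * 2^n\<bar> \<le> real (K+1)"
      proof (cases "e * 2^n = 0")
      case True
      have "real i + 1 \<le> real K" using assms(1) by linarith
      then show ?thesis using my True \<open>real j = real m + real i\<close> unfolding abs_le_iff by simp
    next
      case False
      then have "e * 2^n = 1/2" using e2 by simp
      have "real i + 1 \<le> real K" using assms(1) by linarith
      then show ?thesis using my \<open>e * 2^n = 1/2\<close> \<open>real j = real m + real i\<close> unfolding abs_le_iff by simp
    qed
  qed simp
  finally show ?thesis unfolding j_def .
qed



definition rad :: "real \<Rightarrow> real \<Rightarrow> nat \<Rightarrow> real" where
  "rad hl \<alpha> j = 2 powr (- (hl * real j / \<alpha>))"

definition Kn :: "real \<Rightarrow> real \<Rightarrow> nat \<Rightarrow> nat" where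
  "Kn hl \<alpha> n = nat \<lfloor>2^n * rad hl \<alpha> (n+1)\<rfloor> - 2"

lemma eta_nonneg: "0 \<le> eta \<nu> j" unfolding eta_def by (simp add: pmf_le_1)
lemma eta_le1: "eta \<nu> j \<le> 1" unfolding eta_def by simp

lemma Kn_ge: "real (Kn hl \<alpha> n) \<ge> 2^n * rad hl \<alpha> (n+1) - 3"
  unfolding Kn_def by linarith

lemma geo_summable: "c < 0 \<Longrightarrow> summable (\<lambda>j::nat. 2 powr (c * real j))"
proof -
  assume "c < 0"
  have "2 powr (c * real j) = (2 powr c) ^ j" for j
  proof -
    have "2 powr (c * real j) = (2 powr c) powr (real j)" by (simp add: powr_powr)
    also have "\<dots> = (2 powr c) ^ j" by (rule powr_realpow) simp
    finally show ?thesis .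
  qed
  moreover have "2 powr c < 1" using \<open>c < 0\<close> by (simp add: powr_less_one)
  ultimately show ?thesis by (simp add: summable_geometric)
qed

lemma analysis:
  assumes hl: "hl > 0" and lt: "htilde hl \<nu> < ereal \<alpha>"
  shows "\<alpha> > hl \<and> (\<forall>N \<epsilon>. \<epsilon> > 0 \<longrightarrow> (\<exists>n\<ge>N. 2^n * (1 - eta \<nu> n) ^ Kn hl \<alpha> n < \<epsilon>))"
proof -
  define a where "a h j = 2 powr ((1 - hl / h) * real j) * eta \<nu> j" for h j
  obtain h where h: "h > 0" "\<not> summable (a h)" "h < \<alpha>"
    using lt unfolding htilde_def Inf_less_iff a_def by auto
  have a0: "0 \<le> a h j" for j unfolding a_def by (simp add: eta_nonneg)
  have hhl: "h \<ge> hl"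
  proof (rule ccontr)
    assume "\<not> h \<ge> hl"
    then have "1 - hl / h < 0" using h by (simp add: field_simps)
    then have "summable (\<lambda>j::nat. 2 powr ((1 - hl / h) * real j))" by (rule geo_summable)
    moreover have "norm (a h j) \<le> 2 powr ((1 - hl / h) * real j)" for j
      using a0[of j] eta_le1[of \<nu> j] unfolding a_def by (simp add: mult_left_le)
    ultimately have "summable (a h)" by (rule summable_comparison_test'[where N=0])
    then show False using h by simp
  qed
  have ahl: "\<alpha> > hl" using hhl h by simp
  define \<beta> where "\<beta> = 1 - hl / \<alpha>"
  define d where "d = hl / h - hl / \<alpha>"
  define \<delta> where "\<delta> = d / 2"
  have dpos: "d > 0" unfolding d_def using h hl by (simp add: frac_less2)
  have "\<delta> > 0" unfolding \<delta>_def using dpos by simp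
  have freq: "\<exists>n\<ge>N. a h n > 2 powr (- \<delta> * real n)" for N
  proof (rule ccontr)
    assume "\<not> ?thesis"
    then have "\<forall>n\<ge>N. norm (a h n) \<le> 2 powr (- \<delta> * real n)" using a0 by (auto simp: not_less)
    moreover have "summable (\<lambda>j::nat. 2 powr (- \<delta> * real j))" using \<open>\<delta> > 0\<close> by (intro geo_summable) simp
    ultimately have "summable (a h)" using summable_comparison_test'[of "\<lambda>j::nat. 2 powr (- \<delta> * real j)" N "a h"] by blast
    then show False using h by simp
  qed
  define c where "c = 2 powr (- hl / \<alpha>)"
  have cpos: "c > 0" unfolding c_def by simp
  define g where "g n = 2^n * exp (3 - c * 2 powr (\<delta> * real n))" for n :: nat
  have glim: "g \<longlonglongrightarrow> 0" unfolding g_def using cpos \<open>\<delta> > 0\<close> by real_asymp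
  have bound: "2^n * (1 - eta \<nu> n) ^ Kn hl \<alpha> n \<le> g n" if an: "a h n > 2 powr (- \<delta> * real n)" for n
  proof -
    let ?e = "eta \<nu> n" and ?K = "Kn hl \<alpha> n"
    have r: "2^n * rad hl \<alpha> (n+1) = c * 2 powr (\<beta> * real n)"
      unfolding rad_def c_def \<beta>_def
      by (simp add: powr_realpow[symmetric] powr_add[symmetric] field_simps add_divide_distrib)
    have e1: "2 powr (\<beta> * real n) * ?e = a h n * 2 powr (d * real n)"
      unfolding a_def \<beta>_def d_def by (simp add: powr_add[symmetric] field_simps)
    have "a h n * 2 powr (d * real n) > 2 powr (- \<delta> * real n) * 2 powr (d * real n)"
      using an by simp
    also have "2 powr (- \<delta> * real n) * 2 powr (d * real n) = 2 powr (\<delta> * real n)"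
      unfolding \<delta>_def by (simp add: powr_add[symmetric] field_simps)
    finally have e2: "2 powr (\<beta> * real n) * ?e > 2 powr (\<delta> * real n)" using e1 by simp
    have "real ?K * ?e \<ge> (c * 2 powr (\<beta> * real n) - 3) * ?e"
      using Kn_ge[of n hl \<alpha>] r eta_nonneg[of \<nu> n] by (intro mult_right_mono) auto
    also have "(c * 2 powr (\<beta> * real n) - 3) * ?e \<ge> c * (2 powr (\<beta> * real n) * ?e) - 3"
      using eta_le1[of \<nu> n] eta_nonneg[of \<nu> n] by (simp add: algebra_simps)
    finally have KE: "real ?K * ?e \<ge> c * 2 powr (\<delta> * real n) - 3"
      using e2 cpos by (smt (verit) mult_strict_left_mono)
    have "(1 - ?e) ^ ?K \<le> exp (- ?e) ^ ?K"
      using eta_le1[of \<nu> n] by (intro power_mono) (auto simp: exp_ge_add_one_self[of "- ?e", simplified])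
    also have "\<dots> = exp (- (real ?K * ?e))" by (simp add: exp_of_nat_mult[symmetric])
    also have "\<dots> \<le> exp (3 - c * 2 powr (\<delta> * real n))" using KE by simp
    finally show ?thesis unfolding g_def by simp
  qed
  show ?thesis
  proof (intro conjI ahl allI impI)
    fix N :: nat and \<epsilon> :: real assume "\<epsilon> > 0"
    then obtain M where M: "\<forall>n\<ge>M. g n < \<epsilon>"
      using glim by (metis (no_types, lifting) LIMSEQ_D abs_less_iff diff_zero real_norm_def)
    obtain n where n: "n \<ge> max N M" "a h n > 2 powr (- \<delta> * real n)" using freq by blast
    have "2^n * (1 - eta \<nu> n) ^ Kn hl \<alpha> n \<le> g n" using bound n(2) .
    also have "g n < \<epsilon>" using M n(1) by simp
    finally show "\<exists>n\<ge>N. 2^n * (1 - eta \<nu> n) ^ Kn hl \<alpha> n < \<epsilon>" using n(1) by auto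
  qed
qed



locale treeproc = prob_space M for M :: "'a measure" +
  fixes X :: "bool list \<Rightarrow> 'a \<Rightarrow> bool" and \<nu> :: "bool \<Rightarrow> nat \<Rightarrow> (bool \<times> bool) pmf"
  assumes Xm: "\<And>u. X u \<in> measurable M (count_space UNIV)"
  and CE: "\<And>u A. AE \<omega> in M.
           real_cond_exp M (Gsig M X u)
             (indicator {\<omega>' \<in> space M. (X (u @ [False]) \<omega>', X (u @ [True]) \<omega>') \<in> A}) \<omega>
           = measure_pmf.prob (\<nu> (X u \<omega>) (length u)) A"
begin

definition gens where "gens u = (\<Union>v \<in> - descendants u. {X v -` A \<inter> space M | A. A \<subseteq> (UNIV :: bool set)})"

lemma gens_Pow: "gens u \<subseteq> Pow (space M)" unfolding gens_def by auto

lemma gens_sets: "gens u \<subseteq> sets M"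
  unfolding gens_def using Xm by (auto intro: measurable_sets)

lemma space_G[simp]: "space (Gsig M X u) = space M"
  unfolding Gsig_def gens_def[symmetric] using gens_Pow by (simp add: space_measure_of)

lemma sets_G: "sets (Gsig M X u) = sigma_sets (space M) (gens u)"
  unfolding Gsig_def gens_def[symmetric] using gens_Pow by (simp add: sets_measure_of)

lemma subalg: "subalgebra M (Gsig M X u)"
  unfolding subalgebra_def using sets_G[of u] sets.sigma_sets_subset[OF gens_sets[of u]] by auto

lemma XG: "v \<notin> descendants u \<Longrightarrow> X v \<in> measurable (Gsig M X u) (count_space UNIV)"
proof (rule measurableI)
  fix A :: "bool set" assume "v \<notin> descendants u"
  then have "X v -` A \<inter> space M \<in> gens u" unfolding gens_def by blast
  then show "X v -` A \<inter> space (Gsig M X u) \<in> sets (Gsig M X u)"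
    unfolding sets_G by auto
qed simp

lemma pred_set: "f \<in> measurable N (count_space UNIV) \<Longrightarrow> {\<omega> \<in> space N. f \<omega>} \<in> sets N"
proof -
  assume "f \<in> measurable N (count_space UNIV)"
  then have "f -` {True} \<inter> space N \<in> sets N" by (rule measurable_sets) simp
  moreover have "f -` {True} \<inter> space N = {\<omega> \<in> space N. f \<omega>}" by auto
  ultimately show ?thesis by simp
qed

definition Ev :: "bool list list \<Rightarrow> 'a set" where
  "Ev us = {\<omega> \<in> space M. \<forall>v\<in>set us. \<not> X v \<omega> \<and> \<not> X (v @ [False]) \<omega> \<and> \<not> X (v @ [True]) \<omega>}"

lemma Ev_sets: "Ev us \<in> sets M"
proof -
  have "{\<omega> \<in> space M. \<not> X v \<omega> \<and> \<not> X (v @ [False]) \<omega> \<and> \<not> X (v @ [True]) \<omega>} \<in> sets M" for v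
    using pred_set[OF Xm] by (intro sets.sets_Collect_conj sets.sets_Collect_neg) auto
  then show ?thesis unfolding Ev_def by (intro sets.sets_Collect_finite_All) auto
qed

lemma step:
  assumes B: "B \<in> sets (Gsig M X u)" "\<And>\<omega>. \<omega> \<in> B \<Longrightarrow> \<not> X u \<omega>"
  shows "measure M (B \<inter> {\<omega> \<in> space M. \<not> X (u @ [False]) \<omega> \<and> \<not> X (u @ [True]) \<omega>})
        = measure M B * (1 - eta \<nu> (length u))"
proof -
  interpret S: finite_measure_subalgebra M "Gsig M X u"
    by unfold_locales (rule subalg)
  define D where "D = {\<omega>' \<in> space M. (X (u @ [False]) \<omega>', X (u @ [True]) \<omega>') \<in> {(False, False)}}"
  have DC: "D = {\<omega> \<in> space M. \<not> X (u @ [False]) \<omega> \<and> \<not> X (u @ [True]) \<omega>}" unfolding D_def by auto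
  have Ds: "D \<in> sets M" unfolding DC using pred_set[OF Xm]
    by (intro sets.sets_Collect_conj sets.sets_Collect_neg) auto
  have BM: "B \<in> sets M" using B(1) subalg unfolding subalgebra_def by auto
  have int: "integrable M (indicator D :: 'a \<Rightarrow> real)" using Ds by (intro integrable_real_indicator) (auto simp: emeasure_eq_measure)
  define p where "p = 1 - eta \<nu> (length u)"
  have p: "measure_pmf.prob (\<nu> False (length u)) {(False, False)} = p"
    unfolding p_def eta_def by (simp add: measure_pmf_single)
  have "measure M (B \<inter> D) = (\<integral>x\<in>B. indicator D x \<partial>M)"
    unfolding set_lebesgue_integral_def using BM Ds
    by (simp add: indicator_inter_arith[symmetric])
  also have "\<dots> = (\<integral>x\<in>B. real_cond_exp M (Gsig M X u) (indicator D) x \<partial>M)"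
    by (rule S.real_cond_exp_intA[OF int B(1)])
  also have "\<dots> = (\<integral>x. indicator B x * p \<partial>M)"
    unfolding set_lebesgue_integral_def
  proof (rule integral_cong_AE)
    show "(\<lambda>x. indicator B x *\<^sub>R real_cond_exp M (Gsig M X u) (indicator D) x) \<in> borel_measurable M"
      using BM by measurable
    show "(\<lambda>x. indicator B x * p) \<in> borel_measurable M" using BM by measurable
    show "AE x in M. indicator B x *\<^sub>R real_cond_exp M (Gsig M X u) (indicator D) x = indicator B x * p"
      using CE[of u "{(False, False)}"] unfolding D_def[symmetric]
    proof eventually_elim
      case (elim x)
      then show ?case using B(2)[of x] p by (cases "x \<in> B") auto
    qed
  qed
  also have "\<dots> = measure M B * p" using BM by simp
  finally show ?thesis unfolding DC p_def .
qed

lemma self_not_desc: "u \<notin> descendants u" unfolding descendants_def by auto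

lemma not_desc:
  assumes "length v = length u" "v \<noteq> u"
  shows "v \<notin> descendants u" "v @ [b] \<notin> descendants u" "u \<notin> descendants u"
proof -
  show "v \<notin> descendants u" using assms unfolding descendants_def by auto
  show "u \<notin> descendants u" unfolding descendants_def by auto
  show "v @ [b] \<notin> descendants u"
  proof
    assume "v @ [b] \<in> descendants u"
    then obtain w where w: "v @ [b] = u @ w" "w \<noteq> []" unfolding descendants_def by auto
    then have "v = u" using assms(1) append_eq_append_conv[of v u "[b]" w] by simp
    then show False using assms(2) by simp
  qed
qed

lemma Ev_bound:
  "distinct us \<Longrightarrow> (\<forall>v\<in>set us. length v = n) \<Longrightarrow> measure M (Ev us) \<le> (1 - eta \<nu> n) ^ length us"
proof (induction us)
  case Nil
  then show ?case by simp
next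
  case (Cons u us)
  have lu: "length u = n" using Cons.prems by simp
  define B where "B = {\<omega> \<in> space (Gsig M X u). (\<forall>v\<in>set us. \<not> X v \<omega> \<and> \<not> X (v @ [False]) \<omega> \<and> \<not> X (v @ [True]) \<omega>) \<and> \<not> X u \<omega>}"
  have Bs: "B \<in> sets (Gsig M X u)"
  proof -
    have "{\<omega> \<in> space (Gsig M X u). \<not> X v \<omega> \<and> \<not> X (v @ [False]) \<omega> \<and> \<not> X (v @ [True]) \<omega>} \<in> sets (Gsig M X u)"
      if v: "v \<in> set us" for v
    proof -
      have "length v = length u" "v \<noteq> u" using v Cons.prems by auto
      note nd = not_desc[OF this]
      show ?thesis using pred_set[OF XG[OF nd(1)]] pred_set[OF XG[OF nd(2)]] pred_set[OF XG[OF nd(2)]]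
        by (intro sets.sets_Collect_conj sets.sets_Collect_neg) auto
    qed
    then have A1: "{\<omega> \<in> space (Gsig M X u). \<forall>v\<in>set us. \<not> X v \<omega> \<and> \<not> X (v @ [False]) \<omega> \<and> \<not> X (v @ [True]) \<omega>} \<in> sets (Gsig M X u)"
      by (intro sets.sets_Collect_finite_All) auto
    have A2: "{\<omega> \<in> space (Gsig M X u). X u \<omega>} \<in> sets (Gsig M X u)"
      using pred_set[OF XG[OF self_not_desc[of u]]] by simp
    show ?thesis unfolding B_def
      using sets.sets_Collect_conj[OF A1 sets.sets_Collect_neg[OF A2]] by (simp add: conj_commute)
  qed
  have EB: "Ev (u # us) = B \<inter> {\<omega> \<in> space M. \<not> X (u @ [False]) \<omega> \<and> \<not> X (u @ [True]) \<omega>}"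
    unfolding Ev_def B_def by auto
  have BE: "B \<subseteq> Ev us" unfolding Ev_def B_def by auto
  have p0: "0 \<le> 1 - eta \<nu> n" using eta_le1[of \<nu> n] by simp
  have "measure M (Ev (u # us)) = measure M B * (1 - eta \<nu> n)"
    unfolding EB using step[OF Bs] lu unfolding B_def by auto
  also have "\<dots> \<le> measure M (Ev us) * (1 - eta \<nu> n)"
    using BE Ev_sets p0 by (intro mult_right_mono finite_measure_mono) auto
  also have "\<dots> \<le> (1 - eta \<nu> n) ^ length us * (1 - eta \<nu> n)"
    using Cons p0 by (intro mult_right_mono) auto
  finally show ?case by (simp add: mult.commute)
qed

definition Fset :: "real \<Rightarrow> real \<Rightarrow> nat \<Rightarrow> 'a set" where
  "Fset hl \<alpha> n = (\<Union>m\<in>{..<2^n}. Ev (blk n m (Kn hl \<alpha> n)))"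

lemma Fset_sets: "Fset hl \<alpha> n \<in> sets M"
  unfolding Fset_def using Ev_sets by auto

lemma Fset_space: "Fset hl \<alpha> n \<subseteq> space M"
  unfolding Fset_def Ev_def by auto

lemma Fset_bound:
  assumes "Kn hl \<alpha> n \<le> 2^n"
  shows "measure M (Fset hl \<alpha> n) \<le> 2^n * (1 - eta \<nu> n) ^ Kn hl \<alpha> n"
proof -
  have "measure M (Fset hl \<alpha> n) \<le> (\<Sum>m\<in>{..<2^n}. measure M (Ev (blk n m (Kn hl \<alpha> n))))"
    unfolding Fset_def using Ev_sets by (intro finite_measure_subadditive_finite) auto
  also have "\<dots> \<le> (\<Sum>m\<in>{..<(2::nat)^n}. (1 - eta \<nu> n) ^ Kn hl \<alpha> n)"
  proof (rule sum_mono)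
    fix m
    have "measure M (Ev (blk n m (Kn hl \<alpha> n))) \<le> (1 - eta \<nu> n) ^ length (blk n m (Kn hl \<alpha> n))"
      using assms by (intro Ev_bound distinct_blk) (auto dest: set_blk_length)
    then show "measure M (Ev (blk n m (Kn hl \<alpha> n))) \<le> (1 - eta \<nu> n) ^ Kn hl \<alpha> n"
      by (simp add: blk_def)
  qed
  also have "\<dots> = 2^n * (1 - eta \<nu> n) ^ Kn hl \<alpha> n" by simp
  finally show ?thesis .
qed

end

lemma rad_le1: "hl \<ge> 0 \<Longrightarrow> \<alpha> > 0 \<Longrightarrow> rad hl \<alpha> j \<le> 1"
proof -
  assume "hl \<ge> 0" "\<alpha> > 0"
  then have "2 powr (- (hl * real j / \<alpha>)) \<le> 2 powr 0" by (intro powr_mono) auto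
  then show ?thesis unfolding rad_def by simp
qed

lemma Kn_le: assumes "hl \<ge> 0" "\<alpha> > 0" shows "Kn hl \<alpha> n \<le> 2^n"
proof -
  have "2^n * rad hl \<alpha> (n+1) \<le> 2^n" using rad_le1[OF assms, of "n+1"] by (intro mult_left_le) auto
  then have "\<lfloor>2^n * rad hl \<alpha> (n+1)\<rfloor> \<le> \<lfloor>(2::real)^n\<rfloor>" by (rule floor_mono)
  then have "\<lfloor>2^n * rad hl \<alpha> (n+1)\<rfloor> \<le> int (2^n)" by simp
  then have "nat \<lfloor>2^n * rad hl \<alpha> (n+1)\<rfloor> \<le> 2^n" by (simp only: nat_le_iff)
  then show ?thesis unfolding Kn_def by linarith
qed

lemma rad_mono: "hl \<ge> 0 \<Longrightarrow> \<alpha> > 0 \<Longrightarrow> i \<le> j \<Longrightarrow> rad hl \<alpha> j \<le> rad hl \<alpha> i"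
  unfolding rad_def by (intro powr_mono) (auto simp: divide_right_mono mult_left_mono)

context treeproc
begin

lemma cover:
  assumes hl: "hl > 0" "\<alpha> > 0" and \<omega>: "\<omega> \<in> space M" "\<omega> \<notin> Fset hl \<alpha> n"
  shows "\<exists>u. X u \<omega> \<and> length u \<ge> n \<and> tdist x (xpt u) < rad hl \<alpha> (length u)"
proof -
  define K where "K = Kn hl \<alpha> n"
  define m where "m = nat \<lfloor>(x - \<lfloor>x\<rfloor>) * 2^n\<rfloor>"
  have "(x - \<lfloor>x\<rfloor>) * 2^n < 1 * 2^n" by (intro mult_strict_right_mono) (linarith, simp)
  then have "\<lfloor>(x - \<lfloor>x\<rfloor>) * 2^n\<rfloor> < int (2^n)" by (simp add: floor_less_iff)
  moreover have "0 \<le> \<lfloor>(x - \<lfloor>x\<rfloor>) * 2^n\<rfloor>" by simp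
  ultimately have mlt: "m < 2^n" unfolding m_def by (simp add: nat_less_iff)
  have "\<omega> \<notin> Ev (blk n m K)" using \<omega> mlt unfolding Fset_def K_def by auto
  then obtain i where i: "i < K"
    and Xi: "X (wrd n (m+i)) \<omega> \<or> X (wrd n (m+i) @ [False]) \<omega> \<or> X (wrd n (m+i) @ [True]) \<omega>"
    unfolding Ev_def blk_def using \<omega>(1) by auto
  have "real (K + 2) \<le> 2^n * rad hl \<alpha> (n+1)"
  proof -
    have "nat \<lfloor>2^n * rad hl \<alpha> (n+1)\<rfloor> = K + 2" using i unfolding K_def Kn_def by linarith
    then have "int (K+2) = \<lfloor>2^n * rad hl \<alpha> (n+1)\<rfloor>" by linarith
    then have "real (K+2) = real_of_int \<lfloor>2^n * rad hl \<alpha> (n+1)\<rfloor>" by (metis of_int_of_nat_eq)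
    then show ?thesis using of_int_floor_le[of "2^n * rad hl \<alpha> (n+1)"] by linarith
  qed
  then have "real (K + 1) < 2^n * rad hl \<alpha> (n+1)" by simp
  then have Kb: "real (K + 1) / 2^n < rad hl \<alpha> (n+1)" by (simp add: divide_less_eq mult.commute)
  have rm: "rad hl \<alpha> (n+1) \<le> rad hl \<alpha> n" using hl by (intro rad_mono) auto
  define v where "v = wrd n (m+i)"
  have lv: "length v = n" unfolding v_def by simp
  have d0: "tdist x (xpt v) \<le> real (K+1) / 2^n"
    using cover_geom[OF i m_def, of 0] unfolding v_def by simp
  have d1: "tdist x (xpt v + 1 / 2^(n+1)) \<le> real (K+1) / 2^n"
    using cover_geom[OF i m_def, of "1 / 2^(n+1)"] unfolding v_def by simp
  have xF: "xpt (v @ [False]) = xpt v" and xT: "xpt (v @ [True]) = xpt v + 1 / 2^(n+1)"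
    using lv by (simp_all add: xpt_append)
  from Xi consider "X v \<omega>" | "X (v @ [False]) \<omega>" | "X (v @ [True]) \<omega>" unfolding v_def by blast
  then show ?thesis
  proof cases
    case 1 then show ?thesis using d0 Kb rm lv by (intro exI[of _ v]) auto
  next
    case 2 then show ?thesis using d0 Kb lv xF by (intro exI[of _ "v @ [False]"]) auto
  next
    case 3 then show ?thesis using d1 Kb lv xT by (intro exI[of _ "v @ [True]"]) auto
  qed
qed

lemma AE_L:
  assumes hl: "hl > 0" and lt: "htilde hl \<nu> < ereal \<alpha>"
  shows "AE \<omega> in M. Lset hl X \<alpha> \<omega> = UNIV"
proof -
  note an = analysis[OF hl lt]
  have apos: "\<alpha> > 0" using an hl by linarith
  have Kle: "Kn hl \<alpha> n \<le> 2^n" for n using hl apos by (intro Kn_le) auto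
  have null: "(\<Inter>n\<in>{N..}. Fset hl \<alpha> n) \<in> null_sets M" for N
  proof -
    let ?T = "\<Inter>n\<in>{N..}. Fset hl \<alpha> n"
    have Ts: "?T \<in> sets M" using Fset_sets by (intro sets.countable_INT') auto
    have "measure M ?T \<le> \<epsilon>" if "\<epsilon> > 0" for \<epsilon>
    proof -
      obtain n where n: "n \<ge> N" "2^n * (1 - eta \<nu> n) ^ Kn hl \<alpha> n < \<epsilon>" using an \<open>\<epsilon> > 0\<close> by blast
      have "measure M ?T \<le> measure M (Fset hl \<alpha> n)"
        using Fset_sets n(1) by (intro finite_measure_mono) auto
      also have "\<dots> \<le> 2^n * (1 - eta \<nu> n) ^ Kn hl \<alpha> n" by (rule Fset_bound[OF Kle])
      finally show ?thesis using n(2) by simp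
    qed
    note bnd = this
    have "measure M ?T \<le> 0"
    proof (rule ccontr)
      assume "\<not> measure M ?T \<le> 0"
      then have "measure M ?T / 2 > 0" by simp
      from bnd[OF this] \<open>\<not> measure M ?T \<le> 0\<close> show False by linarith
    qed
    then have "measure M ?T = 0" using measure_nonneg[of M ?T] by linarith
    then show ?thesis using Ts by (intro null_setsI) (simp add: emeasure_eq_measure)
  qed
  have "AE \<omega> in M. \<exists>n\<ge>N. \<omega> \<notin> Fset hl \<alpha> n" for N
    by (rule AE_I'[OF null[of N]]) auto
  then have freq: "AE \<omega> in M. \<forall>N. \<exists>n\<ge>N. \<omega> \<notin> Fset hl \<alpha> n"
    by (simp add: AE_all_countable)
  have imp: "Lset hl X \<alpha> \<omega> = UNIV" if om: "\<omega> \<in> space M" and fr: "\<forall>N. \<exists>n\<ge>N. \<omega> \<notin> Fset hl \<alpha> n" for \<omega>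
  proof -
    have "x \<in> Lset hl X \<alpha> \<omega>" for x
    proof -
      define S where "S = {u. X u \<omega> \<and> tdist x (xpt u) < 2 powr (- (hl * real (length u) / \<alpha>))}"
      have "infinite S"
      proof
        assume "finite S"
        then have "finite (length ` S)" by (rule finite_imageI)
        then obtain L where L: "\<forall>u\<in>S. length u \<le> L"
          using finite_nat_set_iff_bounded_le by (metis imageI)
        obtain n where n: "n \<ge> Suc L" "\<omega> \<notin> Fset hl \<alpha> n" using fr by blast
        obtain u where u: "X u \<omega>" "length u \<ge> n" "tdist x (xpt u) < rad hl \<alpha> (length u)"
          using cover[OF hl apos om n(2), of x] by blast
        then have "u \<in> S" unfolding S_def rad_def by simp
        then have "length u \<le> L" using L by blast
        then show False using u(2) n(1) by linarith
      qed
      then show "x \<in> Lset hl X \<alpha> \<omega>" unfolding Lset_def S_def by simp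
    qed
    then show ?thesis by blast
  qed
  show ?thesis using freq by (rule AE_mp) (intro AE_I2 impI imp)
qed

end


lemma Lset_mono:
  assumes "hl \<ge> 0" "0 < a" "a \<le> b"
  shows "Lset hl X a \<omega> \<subseteq> Lset hl X b \<omega>"
proof
  fix x assume x: "x \<in> Lset hl X a \<omega>"
  have le: "2 powr (- (hl * real (length u) / a)) \<le> 2 powr (- (hl * real (length u) / b))" for u :: "bool list"
    using assms by (intro powr_mono) (auto intro!: divide_left_mono mult_pos_pos)
  have "{u. X u \<omega> \<and> tdist x (xpt u) < 2 powr (- (hl * real (length u) / a))}
      \<subseteq> {u. X u \<omega> \<and> tdist x (xpt u) < 2 powr (- (hl * real (length u) / b))}"
    using le by (auto intro: less_le_trans)
  then show "x \<in> Lset hl X b \<omega>" using x unfolding Lset_def by (auto dest: infinite_super)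
qed

theorem mainTheorem6:
  fixes M :: "'a measure"
    and X :: "bool list \<Rightarrow> 'a \<Rightarrow> bool"
    and \<nu> :: "bool \<Rightarrow> nat \<Rightarrow> (bool \<times> bool) pmf"
    and hl :: real
  assumes "prob_space M"
    and "\<And>u. X u \<in> measurable M (count_space UNIV)"
    and "\<And>u A. AE \<omega> in M.
           real_cond_exp M (Gsig M X u)
             (indicator {\<omega>' \<in> space M. (X (u @ [False]) \<omega>', X (u @ [True]) \<omega>') \<in> A}) \<omega>
           = measure_pmf.prob (\<nu> (X u \<omega>) (length u)) A"
    and "hl > 0"
  shows "AE \<omega> in M. \<forall>\<alpha>::real. htilde hl \<nu> < ereal \<alpha> \<longrightarrow> Lset hl X \<alpha> \<omega> = UNIV"
proof -
  interpret treeproc M X \<nu>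
    using assms(1,2,3) by (intro treeproc.intro treeproc_axioms.intro) auto
  have hl: "hl > 0" by (rule assms(4))
  have "AE \<omega> in M. htilde hl \<nu> < ereal (of_rat q) \<longrightarrow> Lset hl X (of_rat q) \<omega> = UNIV" for q :: rat
  proof (cases "htilde hl \<nu> < ereal (of_rat q)")
    case True
    show ?thesis using AE_L[OF hl True] by (rule AE_mp) (intro AE_I2 impI)
  next
    case False
    then show ?thesis by simp
  qed
  then have AEq: "AE \<omega> in M. \<forall>q::rat. htilde hl \<nu> < ereal (of_rat q) \<longrightarrow> Lset hl X (of_rat q) \<omega> = UNIV"
    by (simp add: AE_all_countable)
  show ?thesis using AEq
  proof (rule AE_mp, intro AE_I2 impI allI)
    fix \<omega> \<alpha> assume all: "\<forall>q::rat. htilde hl \<nu> < ereal (of_rat q) \<longrightarrow> Lset hl X (of_rat q) \<omega> = UNIV"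
      and lt: "htilde hl \<nu> < ereal \<alpha>"
    obtain z where z: "htilde hl \<nu> < ereal z" "ereal z < ereal \<alpha>" using ereal_dense2[OF lt] by blast
    then have "z < \<alpha>" by simp
    then obtain r where r: "r \<in> \<rat>" "z < r" "r < \<alpha>" using Rats_dense_in_real by blast
    then obtain q where q: "r = of_rat q" using Rats_cases by blast
    have lr: "htilde hl \<nu> < ereal r" proof -
      have "ereal z < ereal r" using r(2) by simp
      then show ?thesis using z(1) by (rule less_trans[rotated])
    qed
    have "r > hl" using analysis[OF hl lr] by simp
    then have "Lset hl X r \<omega> \<subseteq> Lset hl X \<alpha> \<omega>" using hl r(3) by (intro Lset_mono) auto
    moreover have "Lset hl X r \<omega> = UNIV" using all lr q by blast
    ultimately show "Lset hl X \<alpha> \<omega> = UNIV" by blast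
  qed
qed

end
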